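(* There is a constant $k>0$ such that for infinitely many primes $q$, every first-order sentence $\varphi$ of the ring language $L(+,\times,0,1)$ describing $\mathbb F_q$ satisfies $\log q\le k\,|\varphi|\log|\varphi|$.
   Context: A sentence $\phi$ describes a structure $M$ if $M$ is, up to isomorphism, the unique model of $\phi$. The length $|\phi|$ of a formula is its number of symbols, each variable counting as a single symbol. Here $\log m=\min\{r\in\mathbb N: 2^r\ge m\}$. *)

theory Defs
  imports Complex_Main "HOL-Computational_Algebra.Primes"
begin

datatype rterm = Var nat | Zero | One | Add rterm rterm | Mul rterm rterm

datatype rform = Eq rterm rterm | FTrue | FFalse | Neg rform | Conj rform rform
  | Disj rform rform | Imp rform rform | Iff rform rform
  | Ex nat rform | All nat rform

text \<open>Length = number of symbols (Polish notation, each variable one symbol).\<close>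
fun tlen :: "rterm \<Rightarrow> nat" where
  "tlen (Var _) = 1" | "tlen Zero = 1" | "tlen One = 1"
| "tlen (Add s t) = tlen s + tlen t + 1" | "tlen (Mul s t) = tlen s + tlen t + 1"

fun flen :: "rform \<Rightarrow> nat" where
  "flen (Eq s t) = tlen s + tlen t + 1" | "flen FTrue = 1" | "flen FFalse = 1"
| "flen (Neg f) = flen f + 1"
| "flen (Conj f g) = flen f + flen g + 1" | "flen (Disj f g) = flen f + flen g + 1"
| "flen (Imp f g) = flen f + flen g + 1" | "flen (Iff f g) = flen f + flen g + 1"
| "flen (Ex x f) = flen f + 2" | "flen (All x f) = flen f + 2"

fun tvars :: "rterm \<Rightarrow> nat set" where
  "tvars (Var x) = {x}" | "tvars Zero = {}" | "tvars One = {}"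
| "tvars (Add s t) = tvars s \<union> tvars t" | "tvars (Mul s t) = tvars s \<union> tvars t"

fun fvars :: "rform \<Rightarrow> nat set" where
  "fvars (Eq s t) = tvars s \<union> tvars t" | "fvars FTrue = {}" | "fvars FFalse = {}"
| "fvars (Neg f) = fvars f"
| "fvars (Conj f g) = fvars f \<union> fvars g" | "fvars (Disj f g) = fvars f \<union> fvars g"
| "fvars (Imp f g) = fvars f \<union> fvars g" | "fvars (Iff f g) = fvars f \<union> fvars g"
| "fvars (Ex x f) = fvars f - {x}" | "fvars (All x f) = fvars f - {x}"

definition sentence :: "rform \<Rightarrow> bool" where
  "sentence f \<longleftrightarrow> fvars f = {}"

text \<open>L-structures with carrier a set of naturals (countable structures):
  (carrier, plus, times, zero, one).\<close>
type_synonym lstruct = "nat set \<times> (nat \<Rightarrow> nat \<Rightarrow> nat) \<times> (nat \<Rightarrow> nat \<Rightarrow> nat) \<times> nat \<times> nat"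

definition lstructure :: "lstruct \<Rightarrow> bool" where
  "lstructure M = (case M of (A, p, m, z, u) \<Rightarrow>
     A \<noteq> {} \<and> z \<in> A \<and> u \<in> A \<and> (\<forall>x\<in>A. \<forall>y\<in>A. p x y \<in> A \<and> m x y \<in> A))"

fun teval :: "lstruct \<Rightarrow> (nat \<Rightarrow> nat) \<Rightarrow> rterm \<Rightarrow> nat" where
  "teval M e (Var x) = e x"
| "teval (A, p, m, z, u) e Zero = z"
| "teval (A, p, m, z, u) e One = u"
| "teval (A, p, m, z, u) e (Add s t) = p (teval (A, p, m, z, u) e s) (teval (A, p, m, z, u) e t)"
| "teval (A, p, m, z, u) e (Mul s t) = m (teval (A, p, m, z, u) e s) (teval (A, p, m, z, u) e t)"

fun holds :: "lstruct \<Rightarrow> (nat \<Rightarrow> nat) \<Rightarrow> rform \<Rightarrow> bool" where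
  "holds M e (Eq s t) = (teval M e s = teval M e t)"
| "holds M e FTrue = True" | "holds M e FFalse = False"
| "holds M e (Neg f) = (\<not> holds M e f)"
| "holds M e (Conj f g) = (holds M e f \<and> holds M e g)"
| "holds M e (Disj f g) = (holds M e f \<or> holds M e g)"
| "holds M e (Imp f g) = (holds M e f \<longrightarrow> holds M e g)"
| "holds M e (Iff f g) = (holds M e f \<longleftrightarrow> holds M e g)"
| "holds M e (Ex x f) = (\<exists>a\<in>fst M. holds M (e(x := a)) f)"
| "holds M e (All x f) = (\<forall>a\<in>fst M. holds M (e(x := a)) f)"

definition models :: "lstruct \<Rightarrow> rform \<Rightarrow> bool" where
  "models M f \<longleftrightarrow> (\<forall>e. (\<forall>i. e i \<in> fst M) \<longrightarrow> holds M e f)"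

definition iso :: "lstruct \<Rightarrow> lstruct \<Rightarrow> bool" where
  "iso M N = (case M of (A, p, m, z, u) \<Rightarrow> case N of (B, p', m', z', u') \<Rightarrow>
     \<exists>h. bij_betw h A B \<and> h z = z' \<and> h u = u' \<and>
         (\<forall>x\<in>A. \<forall>y\<in>A. h (p x y) = p' (h x) (h y) \<and> h (m x y) = m' (h x) (h y)))"

definition describes :: "rform \<Rightarrow> lstruct \<Rightarrow> bool" where
  "describes f M \<longleftrightarrow> models M f \<and> (\<forall>N. lstructure N \<and> models N f \<longrightarrow> iso N M)"

definition Fq :: "nat \<Rightarrow> lstruct" where
  "Fq q = ({0..<q}, \<lambda>x y. (x + y) mod q, \<lambda>x y. (x * y) mod q, 0, 1 mod q)"

definition clog :: "nat \<Rightarrow> nat" where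
  "clog m = (LEAST r. 2 ^ r \<ge> m)"

end

theory Submission
  imports Defs
begin


lemma Suc_div_split: "(0::nat) < d \<Longrightarrow> Suc m div d = m div d + (if d dvd Suc m then 1 else 0)"
  by (simp add: div_Suc mod_eq_0_iff_dvd)

lemma pow_big: "(1::nat) < p \<Longrightarrow> n < p ^ n"
  by (simp add: power_gt_expt)

lemma mult_le: assumes "prime (p::nat)" "n > 0" shows "multiplicity p n < n"
proof -
  have "p ^ multiplicity p n dvd n" by (rule multiplicity_dvd)
  then have "p ^ multiplicity p n \<le> n" using assms(2) by (rule dvd_imp_le)
  moreover have "multiplicity p n < p ^ multiplicity p n" using pow_big prime_gt_1_nat assms(1) by blast
  ultimately show ?thesis by simp
qed

lemma pdvd_iff: assumes "prime (p::nat)" "n \<noteq> 0" shows "p ^ i dvd n \<longleftrightarrow> i \<le> multiplicity p n"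
proof -
  have nu: "\<not> is_unit p" using assms(1) by auto
  show ?thesis using multiplicity_geI[OF assms(2) nu] multiplicity_dvd' by blast
qed

lemma legendre:
  fixes p :: nat assumes p: "prime p"
  shows "multiplicity p (fact m :: nat) = (\<Sum>i\<in>{1..m}. m div p ^ i)"
proof (induction m)
  case 0 then show ?case by simp
next
  case (Suc m)
  have p1: "p > 1" using p prime_gt_1_nat by blast
  have "multiplicity p (fact (Suc m) :: nat) = multiplicity p (Suc m) + multiplicity p (fact m :: nat)"
  proof -
    have "(fact (Suc m)::nat) = Suc m * fact m" by simp
    then show ?thesis using prime_elem_multiplicity_mult_distrib[of p "Suc m" "fact m"] p
      by (simp del: fact_Suc)
  qed
  also have "multiplicity p (Suc m) = card {i\<in>{1..Suc m}. p ^ i dvd Suc m}"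
  proof -
    have "{i\<in>{1..Suc m}. p ^ i dvd Suc m} = {1..multiplicity p (Suc m)}"
      using mult_le[OF p, of "Suc m"] by (auto simp: pdvd_iff[OF p])
    then show ?thesis by simp
  qed
  also have "card {i\<in>{1..Suc m}. p ^ i dvd Suc m} = (\<Sum>i\<in>{1..Suc m}. (if p ^ i dvd Suc m then 1 else 0))"
    using sum.inter_filter[of "{1..Suc m}" "\<lambda>_. (1::nat)" "\<lambda>i. p ^ i dvd Suc m"] by simp
  also have "multiplicity p (fact m :: nat) = (\<Sum>i\<in>{1..Suc m}. m div p ^ i)"
  proof -
    have "m div p ^ Suc m = 0" using pow_big[OF p1, of "Suc m"] by simp
    then show ?thesis using Suc.IH by simp
  qed
  also have "(\<Sum>i\<in>{1..Suc m}. (if p ^ i dvd Suc m then 1 else 0)) + (\<Sum>i\<in>{1..Suc m}. m div p ^ i)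
     = (\<Sum>i\<in>{1..Suc m}. Suc m div p ^ i)"
    by (subst sum.distrib[symmetric], rule sum.cong, simp, subst Suc_div_split) (use p1 in auto)
  finally show ?case .
qed



lemma div2_le: assumes "(0::nat) < d" shows "(2*n) div d \<le> 2*(n div d) + (if d \<le> 2*n then 1 else 0)"
proof (cases "d \<le> 2*n")
  case False then show ?thesis by simp
next
  case True
  have e0: "n = (n div d)*d + n mod d" by simp
  have e: "2*n = (2*(n div d))*d + 2*(n mod d)" 
  proof -
    have "2*n = 2*((n div d)*d + n mod d)" by simp
    also have "\<dots> = (2*(n div d))*d + 2*(n mod d)" by (simp only: add_mult_distrib2 mult.assoc)
    finally show ?thesis .
  qed
  have "2*(n mod d) < 2*d" using assms by simp
  then have "2*(n mod d) div d \<le> 1"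
    using less_mult_imp_div_less[of "2*(n mod d)" 2 d] by simp
  moreover have "(2*n) div d = 2*(n div d) + 2*(n mod d) div d"
    using assms by (subst e) simp
  ultimately show ?thesis using True by simp
qed

lemma card_pow_le: assumes "(1::nat) < p" "1 \<le> X" shows "p ^ card {i\<in>{1..K}. p^i \<le> X} \<le> X"
proof (cases "{i\<in>{1..K}. p^i \<le> X} = {}")
  case True then show ?thesis using assms by (simp only: card.empty) simp
next
  case False
  let ?A = "{i\<in>{1..K}. p^i \<le> X}"
  define j where "j = Max ?A"
  have fin: "finite ?A" by simp
  have jA: "j \<in> ?A" using Max_in[OF fin False] j_def by simp
  have "?A \<subseteq> {1..j}" using Max_ge[OF fin] j_def by auto
  then have "card ?A \<le> j" using card_mono[of "{1..j}" ?A] by simp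
  then have "p ^ card ?A \<le> p ^ j" using assms(1) by (simp add: power_increasing)
  also have "\<dots> \<le> X" using jA by simp
  finally show ?thesis .
qed

lemma binom_mult:
  fixes p :: nat assumes p: "prime p" and n: "n > 0"
  shows "p ^ multiplicity p (2*n choose n) \<le> 2*n"
proof -
  have p1: "p > 1" using p prime_gt_1_nat by blast
  let ?C = "2*n choose n"
  have C0: "?C \<noteq> 0" by simp
  have "fact n * fact (2*n - n) * ?C = (fact (2*n) :: nat)"
    by (rule binomial_fact_lemma) simp
  then have fe: "(fact (2*n)::nat) = ?C * (fact n * fact n)" by (simp add: mult_ac)
  have "multiplicity p (fact (2*n)::nat) = multiplicity p ?C + (multiplicity p (fact n :: nat) + multiplicity p (fact n :: nat))"
    unfolding fe using p C0 by (simp add: prime_elem_multiplicity_mult_distrib)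
  then have eq: "(\<Sum>i\<in>{1..2*n}. (2*n) div p ^ i) = multiplicity p ?C + 2 * (\<Sum>i\<in>{1..n}. n div p ^ i)"
    using legendre[OF p] by simp
  have ext: "(\<Sum>i\<in>{1..n}. n div p ^ i) = (\<Sum>i\<in>{1..2*n}. n div p ^ i)"
  proof -
    have "\<forall>i\<in>{1..2*n} - {1..n}. n div p ^ i = 0"
    proof
      fix i assume "i \<in> {1..2*n} - {1..n}"
      then have "n < i" by auto
      then have "n < p ^ i" using pow_big[OF p1, of i] by simp
      then show "n div p ^ i = 0" by simp
    qed
    then show ?thesis by (intro sum.mono_neutral_left) auto
  qed
  have "(\<Sum>i\<in>{1..2*n}. (2*n) div p ^ i) \<le> (\<Sum>i\<in>{1..2*n}. 2*(n div p ^ i) + (if p^i \<le> 2*n then 1 else 0))"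
    by (rule sum_mono, rule div2_le) (use p1 in simp)
  also have "\<dots> = 2 * (\<Sum>i\<in>{1..2*n}. n div p ^ i) + card {i\<in>{1..2*n}. p^i \<le> 2*n}"
    using sum.inter_filter[of "{1..2*n}" "\<lambda>_. (1::nat)" "\<lambda>i. p ^ i \<le> 2*n"]
    by (simp add: sum.distrib sum_distrib_left)
  finally have "multiplicity p ?C \<le> card {i\<in>{1..2*n}. p^i \<le> 2*n}"
    using eq ext by simp
  then have "p ^ multiplicity p ?C \<le> p ^ card {i\<in>{1..2*n}. p^i \<le> 2*n}"
    using p1 by (simp add: power_increasing)
  also have "\<dots> \<le> 2*n" by (rule card_pow_le) (use p1 n in auto)
  finally show ?thesis .
qed

definition pcount :: "nat \<Rightarrow> nat" where "pcount x = card {p. prime p \<and> p \<le> x}"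

lemma binom_le_pow:
  assumes n: "n > 0" shows "(2*n choose n) \<le> (2*n) ^ pcount (2*n)"
proof -
  let ?C = "2*n choose n"
  have C0: "?C > 0" by simp
  have "?C = (\<Prod>p \<in> prime_factors ?C. p ^ multiplicity p ?C)" by (rule prime_factorization_nat[OF C0])
  also have "\<dots> \<le> (\<Prod>p \<in> prime_factors ?C. 2*n)"
    by (rule prod_mono) (auto intro: binom_mult[OF _ n])
  also have "\<dots> = (2*n) ^ card (prime_factors ?C)" by simp
  also have "\<dots> \<le> (2*n) ^ pcount (2*n)"
  proof -
    have sub: "prime_factors ?C \<subseteq> {p. prime p \<and> p \<le> 2*n}"
    proof
      fix p assume pin: "p \<in> prime_factors ?C"
      then have pp: "prime p" by auto
      have "p dvd ?C" using pin by auto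
      then have "1 \<le> multiplicity p ?C" using pdvd_iff[OF pp, of ?C 1] by simp
      then have "p ^ 1 \<le> p ^ multiplicity p ?C" using pp prime_gt_1_nat[OF pp] by (intro power_increasing) auto
      also have "\<dots> \<le> 2*n" by (rule binom_mult[OF pp n])
      finally show "p \<in> {p. prime p \<and> p \<le> 2*n}" using pp by simp
    qed
    have "card (prime_factors ?C) \<le> pcount (2*n)" unfolding pcount_def
      by (rule card_mono[OF _ sub]) simp
    then show ?thesis using n by (intro power_increasing) auto
  qed
  finally show ?thesis .
qed

lemma four_pow_le: assumes "n > 0" shows "4 ^ n \<le> (2 * n choose n) * (2 * n)"
proof -
  have "4^n / (2*real n) \<le> real ((2*n) choose n)" by (rule central_binomial_lower_bound[OF assms])
  then have "real (4^n) \<le> real ((2 * n choose n) * (2 * n))" using assms by (simp add: field_simps)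
  then show ?thesis by (simp only: of_nat_le_iff)
qed

lemma pcount_pow2: assumes "R \<ge> 1" shows "2 ^ R \<le> R * (pcount (2^R) + 1)"
proof -
  define n where "n = (2::nat)^(R-1)"
  have n0: "n > 0" by (simp add: n_def)
  have nn: "2*n = 2^R" using assms by (simp add: n_def power_Suc[symmetric])
  have "(2::nat) ^ (2^R) = 4 ^ n" by (simp add: nn[symmetric] power_mult)
  also have "\<dots> \<le> (2 * n choose n) * (2 * n)" by (rule four_pow_le[OF n0])
  also have "\<dots> \<le> (2*n) ^ pcount (2*n) * (2*n)" using binom_le_pow[OF n0] by simp
  also have "\<dots> = (2^R) ^ (pcount (2^R) + 1)" by (simp only: nn power_Suc2 Suc_eq_plus1[symmetric])
  also have "\<dots> = 2 ^ (R * (pcount (2^R) + 1))" by (simp only: power_mult)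
  finally show ?thesis by (rule power_le_imp_le_exp[of 2, rotated]) simp
qed




fun tren :: "(nat \<Rightarrow> nat) \<Rightarrow> rterm \<Rightarrow> rterm" where
  "tren r (Var x) = Var (r x)" | "tren r Zero = Zero" | "tren r One = One"
| "tren r (Add s t) = Add (tren r s) (tren r t)" | "tren r (Mul s t) = Mul (tren r s) (tren r t)"

fun fren :: "(nat \<Rightarrow> nat) \<Rightarrow> rform \<Rightarrow> rform" where
  "fren r (Eq s t) = Eq (tren r s) (tren r t)" | "fren r FTrue = FTrue" | "fren r FFalse = FFalse"
| "fren r (Neg f) = Neg (fren r f)"
| "fren r (Conj f g) = Conj (fren r f) (fren r g)" | "fren r (Disj f g) = Disj (fren r f) (fren r g)"
| "fren r (Imp f g) = Imp (fren r f) (fren r g)" | "fren r (Iff f g) = Iff (fren r f) (fren r g)"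
| "fren r (Ex x f) = Ex (r x) (fren r f)" | "fren r (All x f) = All (r x) (fren r f)"

fun fav :: "rform \<Rightarrow> nat set" where
  "fav (Eq s t) = tvars s \<union> tvars t" | "fav FTrue = {}" | "fav FFalse = {}"
| "fav (Neg f) = fav f"
| "fav (Conj f g) = fav f \<union> fav g" | "fav (Disj f g) = fav f \<union> fav g"
| "fav (Imp f g) = fav f \<union> fav g" | "fav (Iff f g) = fav f \<union> fav g"
| "fav (Ex x f) = insert x (fav f)" | "fav (All x f) = insert x (fav f)"

lemma teval_ren:
  "(\<forall>v\<in>tvars t. e v = e' (r v)) \<Longrightarrow> teval (A,p,m,z,u) e t = teval (A,p,m,z,u) e' (tren r t)"
  by (induction t) auto

lemma holds_ren:
  "inj_on r (fav f) \<Longrightarrow> (\<forall>v\<in>fav f. e v = e' (r v)) \<Longrightarrow>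
   holds (A,p,m,z,u) e f = holds (A,p,m,z,u) e' (fren r f)"
proof (induction f arbitrary: e e')
  case (Eq s t) then show ?case using teval_ren[of s e e' r] teval_ren[of t e e' r] by auto
next
  case (Ex x f)
  have "holds (A,p,m,z,u) (e(x:=a)) f = holds (A,p,m,z,u) (e'(r x := a)) (fren r f)" for a
  proof (rule Ex.IH)
    show "inj_on r (fav f)" using Ex.prems(1) by (auto intro: inj_on_subset)
    show "\<forall>v\<in>fav f. (e(x := a)) v = (e'(r x := a)) (r v)"
      using Ex.prems by (auto simp: inj_on_def)
  qed
  then show ?case by simp
next
  case (All x f)
  have "holds (A,p,m,z,u) (e(x:=a)) f = holds (A,p,m,z,u) (e'(r x := a)) (fren r f)" for a
  proof (rule All.IH)
    show "inj_on r (fav f)" using All.prems(1) by (auto intro: inj_on_subset)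
    show "\<forall>v\<in>fav f. (e(x := a)) v = (e'(r x := a)) (r v)"
      using All.prems by (auto simp: inj_on_def)
  qed
  then show ?case by simp
next
  case (Conj f g)
  have 1: "holds (A,p,m,z,u) e f = holds (A,p,m,z,u) e' (fren r f)"
    by (rule Conj.IH(1)) (use Conj.prems in \<open>auto intro: inj_on_subset\<close>)
  have 2: "holds (A,p,m,z,u) e g = holds (A,p,m,z,u) e' (fren r g)"
    by (rule Conj.IH(2)) (use Conj.prems in \<open>auto intro: inj_on_subset\<close>)
  show ?case using 1 2 by simp
next
  case (Disj f g)
  have 1: "holds (A,p,m,z,u) e f = holds (A,p,m,z,u) e' (fren r f)"
    by (rule Disj.IH(1)) (use Disj.prems in \<open>auto intro: inj_on_subset\<close>)
  have 2: "holds (A,p,m,z,u) e g = holds (A,p,m,z,u) e' (fren r g)"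
    by (rule Disj.IH(2)) (use Disj.prems in \<open>auto intro: inj_on_subset\<close>)
  show ?case using 1 2 by simp
next
  case (Imp f g)
  have 1: "holds (A,p,m,z,u) e f = holds (A,p,m,z,u) e' (fren r f)"
    by (rule Imp.IH(1)) (use Imp.prems in \<open>auto intro: inj_on_subset\<close>)
  have 2: "holds (A,p,m,z,u) e g = holds (A,p,m,z,u) e' (fren r g)"
    by (rule Imp.IH(2)) (use Imp.prems in \<open>auto intro: inj_on_subset\<close>)
  show ?case using 1 2 by simp
next
  case (Iff f g)
  have 1: "holds (A,p,m,z,u) e f = holds (A,p,m,z,u) e' (fren r f)"
    by (rule Iff.IH(1)) (use Iff.prems in \<open>auto intro: inj_on_subset\<close>)
  have 2: "holds (A,p,m,z,u) e g = holds (A,p,m,z,u) e' (fren r g)"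
    by (rule Iff.IH(2)) (use Iff.prems in \<open>auto intro: inj_on_subset\<close>)
  show ?case using 1 2 by simp
qed auto

lemma models_ren:
  assumes inj: "inj_on r (fav f)"
  shows "models (A,p,m,z,u) f = models (A,p,m,z,u) (fren r f)"
proof
  assume H: "models (A,p,m,z,u) f"
  show "models (A,p,m,z,u) (fren r f)" unfolding models_def
  proof (intro allI impI)
    fix e' :: "nat \<Rightarrow> nat" assume v: "\<forall>i. e' i \<in> fst (A,p,m,z,u)"
    have "holds (A,p,m,z,u) (e' \<circ> r) f" using H v unfolding models_def by auto
    then show "holds (A,p,m,z,u) e' (fren r f)" using holds_ren[OF inj, of "e' \<circ> r" e'] by simp
  qed
next
  assume H: "models (A,p,m,z,u) (fren r f)"
  show "models (A,p,m,z,u) f" unfolding models_def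
  proof (intro allI impI)
    fix e :: "nat \<Rightarrow> nat" assume v: "\<forall>i. e i \<in> fst (A,p,m,z,u)"
    define e' where "e' = (\<lambda>w. if w \<in> r ` fav f then e (inv_into (fav f) r w) else e 0)"
    have v': "\<forall>i. e' i \<in> fst (A,p,m,z,u)" using v by (simp add: e'_def)
    have ag: "\<forall>v\<in>fav f. e v = e' (r v)" using inj by (simp add: e'_def)
    have "holds (A,p,m,z,u) e' (fren r f)" using H v' unfolding models_def by auto
    then show "holds (A,p,m,z,u) e f" using holds_ren[OF inj ag] by simp
  qed
qed

lemma models_ren': "inj_on r (fav f) \<Longrightarrow> models M f = models M (fren r f)"
  by (cases M) (simp add: models_ren)

lemma describes_ren: "inj_on r (fav f) \<Longrightarrow> describes f M \<Longrightarrow> describes (fren r f) M"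
  unfolding describes_def using models_ren' by blast

lemma tlen_ren: "tlen (tren r t) = tlen t" by (induction t) auto
lemma flen_ren: "flen (fren r f) = flen f" by (induction f) (auto simp: tlen_ren)
lemma tvars_ren: "tvars (tren r t) = r ` tvars t" by (induction t) auto
lemma fav_ren: "fav (fren r f) = r ` fav f" by (induction f) (auto simp: tvars_ren)

lemma tvars_card: "finite (tvars t) \<and> card (tvars t) \<le> tlen t"
proof (induction t)
  case (Add s t) then show ?case using card_Un_le[of "tvars s" "tvars t"] by auto
next
  case (Mul s t) then show ?case using card_Un_le[of "tvars s" "tvars t"] by auto
qed auto

lemma fav_card: "finite (fav f) \<and> card (fav f) \<le> flen f"
proof (induction f)
  case (Eq s t) then show ?case using card_Un_le[of "tvars s" "tvars t"] tvars_card[of s] tvars_card[of t] by auto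
next
  case (Conj f g) then show ?case using card_Un_le[of "fav f" "fav g"] by auto
next
  case (Disj f g) then show ?case using card_Un_le[of "fav f" "fav g"] by auto
next
  case (Imp f g) then show ?case using card_Un_le[of "fav f" "fav g"] by auto
next
  case (Iff f g) then show ?case using card_Un_le[of "fav f" "fav g"] by auto
next
  case (Ex x f) then show ?case using card_insert_le_m1[of "flen f + 2" "fav f" x] by (auto simp: card_insert_if)
next
  case (All x f) then show ?case by (auto simp: card_insert_if)
qed auto

lemma normalize:
  assumes "describes f M"
  shows "\<exists>g. describes g M \<and> flen g = flen f \<and> fav g \<subseteq> {0..<flen g}"
proof -
  have fin: "finite (fav f)" using fav_card by blast
  obtain h where h: "bij_betw h (fav f) {0..<card (fav f)}" using ex_bij_betw_finite_nat[OF fin] by blast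
  have inj: "inj_on h (fav f)" using h bij_betw_def by blast
  have "fav (fren h f) = {0..<card (fav f)}" using h by (simp add: fav_ren bij_betw_def)
  also have "\<dots> \<subseteq> {0..<flen f}" using fav_card[of f] by auto
  finally show ?thesis using describes_ren[OF inj assms] flen_ren by metis
qed




fun tenc :: "rterm \<Rightarrow> nat list" where
  "tenc (Var x) = [x + 20]" | "tenc Zero = [1]" | "tenc One = [2]"
| "tenc (Add s t) = 3 # tenc s @ tenc t" | "tenc (Mul s t) = 4 # tenc s @ tenc t"

fun fenc :: "rform \<Rightarrow> nat list" where
  "fenc (Eq s t) = 5 # tenc s @ tenc t" | "fenc FTrue = [6]" | "fenc FFalse = [7]"
| "fenc (Neg f) = 8 # fenc f"
| "fenc (Conj f g) = 9 # fenc f @ fenc g" | "fenc (Disj f g) = 10 # fenc f @ fenc g"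
| "fenc (Imp f g) = 11 # fenc f @ fenc g" | "fenc (Iff f g) = 12 # fenc f @ fenc g"
| "fenc (Ex x f) = 13 # (x + 20) # fenc f" | "fenc (All x f) = 14 # (x + 20) # fenc f"

lemma tenc_inj: "tenc s @ xs = tenc t @ ys \<Longrightarrow> s = t \<and> xs = ys"
proof (induction s arbitrary: t xs ys)
  case (Add s1 s2)
  show ?case
  proof (cases t)
    case (Add t1 t2)
    then have "tenc s1 @ (tenc s2 @ xs) = tenc t1 @ (tenc t2 @ ys)" using Add.prems by simp
    then have 1: "s1 = t1" and "tenc s2 @ xs = tenc t2 @ ys" using Add.IH(1) by blast+
    then have "s2 = t2 \<and> xs = ys" using Add.IH(2) by blast
    then show ?thesis using 1 \<open>t = Add t1 t2\<close> by simp
  qed (use Add.prems in auto)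
next
  case (Mul s1 s2)
  show ?case
  proof (cases t)
    case (Mul t1 t2)
    then have "tenc s1 @ (tenc s2 @ xs) = tenc t1 @ (tenc t2 @ ys)" using Mul.prems by simp
    then have 1: "s1 = t1" and "tenc s2 @ xs = tenc t2 @ ys" using Mul.IH(1) by blast+
    then have "s2 = t2 \<and> xs = ys" using Mul.IH(2) by blast
    then show ?thesis using 1 \<open>t = Mul t1 t2\<close> by simp
  qed (use Mul.prems in auto)
next
  case (Var x) then show ?case by (cases t) auto
next
  case Zero then show ?case by (cases t) auto
next
  case One then show ?case by (cases t) auto
qed

lemma fenc_inj: "fenc f @ xs = fenc g @ ys \<Longrightarrow> f = g \<and> xs = ys"
proof (induction f arbitrary: g xs ys)
  case (Eq s1 s2)
  show ?case
  proof (cases g)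
    case (Eq t1 t2)
    then have "tenc s1 @ (tenc s2 @ xs) = tenc t1 @ (tenc t2 @ ys)" using Eq.prems by simp
    then have 1: "s1 = t1" and "tenc s2 @ xs = tenc t2 @ ys" using tenc_inj by blast+
    then have "s2 = t2 \<and> xs = ys" using tenc_inj by blast
    then show ?thesis using 1 \<open>g = Eq t1 t2\<close> by simp
  qed (use Eq.prems in auto)
next
  case FTrue then show ?case by (cases g) auto
next
  case FFalse then show ?case by (cases g) auto
next
  case (Neg f)
  show ?case
  proof (cases g)
    case (Neg g1)
    then show ?thesis using Neg.prems Neg.IH by auto
  qed (use Neg.prems in auto)
next
  case (Conj f1 f2)
  show ?case
  proof (cases g)
    case (Conj g1 g2)
    then have "fenc f1 @ (fenc f2 @ xs) = fenc g1 @ (fenc g2 @ ys)" using Conj.prems by simp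
    then have 1: "f1 = g1" and "fenc f2 @ xs = fenc g2 @ ys" using Conj.IH(1) by blast+
    then have "f2 = g2 \<and> xs = ys" using Conj.IH(2) by blast
    then show ?thesis using 1 \<open>g = Conj g1 g2\<close> by simp
  qed (use Conj.prems in auto)
next
  case (Disj f1 f2)
  show ?case
  proof (cases g)
    case (Disj g1 g2)
    then have "fenc f1 @ (fenc f2 @ xs) = fenc g1 @ (fenc g2 @ ys)" using Disj.prems by simp
    then have 1: "f1 = g1" and "fenc f2 @ xs = fenc g2 @ ys" using Disj.IH(1) by blast+
    then have "f2 = g2 \<and> xs = ys" using Disj.IH(2) by blast
    then show ?thesis using 1 \<open>g = Disj g1 g2\<close> by simp
  qed (use Disj.prems in auto)
next
  case (Imp f1 f2)
  show ?case
  proof (cases g)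
    case (Imp g1 g2)
    then have "fenc f1 @ (fenc f2 @ xs) = fenc g1 @ (fenc g2 @ ys)" using Imp.prems by simp
    then have 1: "f1 = g1" and "fenc f2 @ xs = fenc g2 @ ys" using Imp.IH(1) by blast+
    then have "f2 = g2 \<and> xs = ys" using Imp.IH(2) by blast
    then show ?thesis using 1 \<open>g = Imp g1 g2\<close> by simp
  qed (use Imp.prems in auto)
next
  case (Iff f1 f2)
  show ?case
  proof (cases g)
    case (Iff g1 g2)
    then have "fenc f1 @ (fenc f2 @ xs) = fenc g1 @ (fenc g2 @ ys)" using Iff.prems by simp
    then have 1: "f1 = g1" and "fenc f2 @ xs = fenc g2 @ ys" using Iff.IH(1) by blast+
    then have "f2 = g2 \<and> xs = ys" using Iff.IH(2) by blast
    then show ?thesis using 1 \<open>g = Iff g1 g2\<close> by simp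
  qed (use Iff.prems in auto)
next
  case (Ex x f1)
  show ?case
  proof (cases g)
    case (Ex y g1)
    then show ?thesis using Ex.prems Ex.IH by auto
  qed (use Ex.prems in auto)
next
  case (All x f1)
  show ?case
  proof (cases g)
    case (All y g1)
    then show ?thesis using All.prems All.IH by auto
  qed (use All.prems in auto)
qed

lemma tenc_len: "length (tenc t) = tlen t" by (induction t) auto
lemma fenc_len: "length (fenc f) = flen f" by (induction f) (auto simp: tenc_len)
lemma tenc_set: "tvars t \<subseteq> {0..<N} \<Longrightarrow> set (tenc t) \<subseteq> {0..<N+20}" by (induction t) auto
lemma fenc_set: "fav f \<subseteq> {0..<N} \<Longrightarrow> set (fenc f) \<subseteq> {0..<N+20}"
  by (induction f) (use tenc_set in auto)

definition S :: "nat \<Rightarrow> rform set" where "S N = {f. flen f \<le> N \<and> fav f \<subseteq> {0..<N}}"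

lemma S_card: "finite (S N) \<and> card (S N) \<le> (N+20)^(N+1)"
proof -
  let ?L = "{xs. set xs \<subseteq> {0..<N+20} \<and> length xs \<le> N}"
  have inj: "inj_on fenc (S N)" unfolding inj_on_def using fenc_inj[where xs="[]" and ys="[]"] by auto
  have sub: "fenc ` S N \<subseteq> ?L" unfolding S_def using fenc_set fenc_len by auto
  have finL: "finite ?L" by (rule finite_lists_length_le) simp
  have fin: "finite (S N)" using finite_subset[OF sub finL] finite_image_iff[OF inj] by blast
  have "card (S N) = card (fenc ` S N)" using card_image[OF inj] by simp
  also have "\<dots> \<le> card ?L" by (rule card_mono[OF finL sub])
  also have "\<dots> = (\<Sum>i\<le>N. (N+20)^i)" by (subst card_lists_length_le) simp_all
  also have "\<dots> \<le> (\<Sum>i\<le>N. (N+20)^N)" by (rule sum_mono) (simp add: power_increasing)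
  also have "\<dots> = (N+1) * (N+20)^N" by simp
  also have "\<dots> \<le> (N+20) * (N+20)^N" by (rule mult_right_mono) simp_all
  also have "\<dots> = (N+20)^(N+1)" by simp
  finally show ?thesis using fin by simp
qed




lemma clog_ge: "n \<le> 2 ^ clog n"
  unfolding clog_def by (rule LeastI[of "\<lambda>r. n \<le> 2 ^ r" n]) (simp add: less_imp_le)

lemma clog_le: "n \<le> 2 ^ R \<Longrightarrow> clog n \<le> R"
  unfolding clog_def by (rule Least_le)

lemma clog_1: "clog 1 = 0"
  unfolding clog_def by simp

lemma clog_pos: "2 \<le> n \<Longrightarrow> 1 \<le> clog n"
proof (rule ccontr)
  assume "2 \<le> n" "\<not> 1 \<le> clog n"
  then have "clog n = 0" by simp
  then show False using clog_ge[of n] \<open>2 \<le> n\<close> by simp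
qed

lemma Fq_lstructure: "q > 0 \<Longrightarrow> lstructure (Fq q)"
  unfolding lstructure_def Fq_def by auto

lemma Fq_iso: "iso (Fq a) (Fq b) \<Longrightarrow> a = b"
  unfolding iso_def Fq_def using bij_betw_same_card by fastforce

lemma describes_unique:
  assumes "describes f (Fq a)" "describes f (Fq b)" "b > 0" shows "a = b"
proof -
  have "models (Fq b) f" using assms(2) describes_def by blast
  then have "iso (Fq b) (Fq a)" using assms(1) Fq_lstructure[OF assms(3)] describes_def by blast
  then show ?thesis using Fq_iso by metis
qed

lemma pow_bound: assumes "2 \<le> N" shows "(N+20)^(N+1) \<le> (2::nat)^(12*N*clog N)"
proof -
  define c where "c = clog N"
  have c1: "1 \<le> c" using clog_pos[OF assms] c_def by simp
  have Nc: "N \<le> 2^c" using clog_ge c_def by simp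
  have "(1::nat) \<le> 2^c" by simp
  then have "N + 20 \<le> 2^c + 20 * 2^c" using Nc by linarith
  also have "\<dots> \<le> 2^5 * 2^c" by simp
  also have "\<dots> = 2^(c+5)" by (simp add: power_add)
  also have "\<dots> \<le> 2^(6*c)" using c1 by (intro power_increasing) auto
  finally have b: "N + 20 \<le> 2^(6*c)" .
  have "(N+20)^(N+1) \<le> (2^(6*c))^(N+1)" by (rule power_mono[OF b]) simp
  also have "\<dots> = 2^(6*c*(N+1))" by (simp only: power_mult)
  also have "\<dots> \<le> 2^(12*N*c)" using assms by (intro power_increasing) auto
  finally show ?thesis using c_def by simp
qed

lemma eight: "2 \<le> m \<Longrightarrow> 8*m < (8::nat)^m"
proof (induction m rule: dec_induct)
  case base then show ?case by simp
next
  case (step m)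
  then have "8 * Suc m \<le> 8 * (8*m)" by simp
  also have "\<dots> < 8 * 8^m" using step by simp
  finally show ?case by simp
qed

lemma bad_bound:
  fixes P0 m :: nat
  assumes m2: "2 \<le> m"
    and bad: "\<And>q. prime q \<Longrightarrow> P0 < q \<Longrightarrow>
      \<exists>\<phi>. sentence \<phi> \<and> describes \<phi> (Fq q) \<and> 48 * flen \<phi> * clog (flen \<phi>) < clog q"
  shows "pcount (2^(4*m)) \<le> P0 + 1 + (441 + 2^m)"
proof -
  define R where "R = 4*m"
  have R1: "1 \<le> R" using m2 R_def by simp
  define W where "W = {\<psi>. 48 * flen \<psi> * clog (flen \<psi>) < R \<and> fav \<psi> \<subseteq> {0..<flen \<psi>}}"
  define Q where "Q = {q. prime q \<and> P0 < q \<and> q \<le> 2^R}"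
  define Ns where "Ns = {n. n \<le> R \<and> 48 * n * clog n < R}"
  define N where "N = Max Ns"
  have finNs: "finite Ns" unfolding Ns_def by simp
  have oneNs: "1 \<in> Ns" unfolding Ns_def using R1 clog_1 by simp
  have NNs: "N \<in> Ns" unfolding N_def using Max_in[OF finNs] oneNs by blast
  have WS: "W \<subseteq> S N"
  proof
    fix \<psi> assume "\<psi> \<in> W"
    then have a: "48 * flen \<psi> * clog (flen \<psi>) < R" and b: "fav \<psi> \<subseteq> {0..<flen \<psi>}" by (auto simp: W_def)
    have "flen \<psi> \<le> R"
    proof (cases "2 \<le> flen \<psi>")
      case True
      then have "1 \<le> clog (flen \<psi>)" by (rule clog_pos)
      then have "flen \<psi> \<le> flen \<psi> * clog (flen \<psi>)" by (metis mult.right_neutral mult_le_mono2)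
      moreover have "flen \<psi> * clog (flen \<psi>) \<le> 48 * flen \<psi> * clog (flen \<psi>)" by simp
      ultimately show ?thesis using a by linarith
    next
      case False then show ?thesis using R1 by simp
    qed
    then have "flen \<psi> \<in> Ns" using a Ns_def by simp
    then have "flen \<psi> \<le> N" unfolding N_def using Max_ge[OF finNs] by blast
    then show "\<psi> \<in> S N" using b unfolding S_def by auto
  qed
  have finS: "finite (S N)" using S_card by blast
  have finW: "finite W" using finite_subset[OF WS finS] .
  have cardW: "card W \<le> 441 + 2^m"
  proof -
    have "card W \<le> card (S N)" by (rule card_mono[OF finS WS])
    also have "\<dots> \<le> (N+20)^(N+1)" using S_card by blast
    also have "\<dots> \<le> 441 + 2^m"
    proof (cases "2 \<le> N")
      case True
      have "(N+20)^(N+1) \<le> (2::nat)^(12*N*clog N)" by (rule pow_bound[OF True])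
      also have "\<dots> \<le> 2^m"
      proof (rule power_increasing)
        have "48 * N * clog N < R" using NNs Ns_def by simp
        then show "12*N*clog N \<le> m" using R_def by simp
      qed simp
      finally show ?thesis by simp
    next
      case False
      then have "N = 0 \<or> N = 1" by auto
      then show ?thesis by auto
    qed
    finally show ?thesis .
  qed
  define g where "g = (\<lambda>q. SOME \<psi>. \<psi> \<in> W \<and> describes \<psi> (Fq q))"
  have gW: "g q \<in> W \<and> describes (g q) (Fq q)" if qQ: "q \<in> Q" for q
  proof -
    have pq: "prime q" "P0 < q" "q \<le> 2^R" using qQ Q_def by auto
    obtain \<phi> where \<phi>: "describes \<phi> (Fq q)" "48 * flen \<phi> * clog (flen \<phi>) < clog q"
      using bad[OF pq(1,2)] by blast
    obtain \<psi> where \<psi>: "describes \<psi> (Fq q)" "flen \<psi> = flen \<phi>" "fav \<psi> \<subseteq> {0..<flen \<psi>}"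
      using normalize[OF \<phi>(1)] by blast
    have "clog q \<le> R" using clog_le pq(3) by blast
    then have "\<psi> \<in> W" using \<phi>(2) \<psi> W_def by simp
    then have "\<exists>\<psi>. \<psi> \<in> W \<and> describes \<psi> (Fq q)" using \<psi>(1) by blast
    then show ?thesis unfolding g_def by (rule someI_ex)
  qed
  have inj: "inj_on g Q"
  proof (rule inj_onI)
    fix a b assume a: "a \<in> Q" and b: "b \<in> Q" and e: "g a = g b"
    have "b > 0" using b Q_def prime_gt_0_nat by auto
    then show "a = b" using gW[OF a] gW[OF b] e describes_unique by metis
  qed
  have cardQ: "card Q \<le> card W"
    by (rule card_inj_on_le[OF inj _ finW]) (use gW in blast)
  have "{p. prime p \<and> p \<le> 2^R} \<subseteq> {..P0} \<union> Q" unfolding Q_def by auto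
  then have "pcount (2^R) \<le> card ({..P0} \<union> Q)" unfolding pcount_def
    by (rule card_mono[rotated]) (simp add: Q_def)
  also have "\<dots> \<le> card {..P0} + card Q" by (rule card_Un_le)
  also have "\<dots> \<le> P0 + 1 + (441 + 2^m)" using cardQ cardW by simp
  finally show ?thesis using R_def by simp
qed

theorem proposition4p3:
  shows "\<exists>k::real. k > 0 \<and>
    infinite {q::nat. prime q \<and>
      (\<forall>\<phi>. sentence \<phi> \<and> describes \<phi> (Fq q) \<longrightarrow>
         real (clog q) \<le> k * real (flen \<phi>) * real (clog (flen \<phi>)))}"
proof (intro exI conjI)
  show "(48::real) > 0" by simp
  let ?G = "{q::nat. prime q \<and>
      (\<forall>\<phi>. sentence \<phi> \<and> describes \<phi> (Fq q) \<longrightarrow>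
         real (clog q) \<le> 48 * real (flen \<phi>) * real (clog (flen \<phi>)))}"
  show "infinite ?G"
  proof
    assume fin: "finite ?G"
    then obtain P0 where P0: "\<forall>q\<in>?G. q \<le> P0" using finite_nat_set_iff_bounded_le by blast
    have bad: "\<exists>\<phi>. sentence \<phi> \<and> describes \<phi> (Fq q) \<and> 48 * flen \<phi> * clog (flen \<phi>) < clog q"
      if qp: "prime q" "P0 < q" for q
    proof -
      have "q \<notin> ?G" using P0 qp by auto
      then obtain \<phi> where \<phi>: "sentence \<phi>" "describes \<phi> (Fq q)"
        "\<not> real (clog q) \<le> 48 * real (flen \<phi>) * real (clog (flen \<phi>))" using qp by auto
      then have "real (48 * flen \<phi> * clog (flen \<phi>)) < real (clog q)" by simp
      then have "48 * flen \<phi> * clog (flen \<phi>) < clog q" by (simp only: of_nat_less_iff)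
      then show ?thesis using \<phi> by blast
    qed
    define C where "C = P0 + 443"
    define m where "m = C + 1"
    have m2: "2 \<le> m" using m_def C_def by simp
    have pc: "pcount (2^(4*m)) \<le> P0 + 1 + (441 + 2^m)" by (rule bad_bound[OF m2 bad])
    have "2^(4*m) \<le> 4*m * (pcount (2^(4*m)) + 1)" by (rule pcount_pow2) (use m2 in simp)
    also have "\<dots> \<le> 4*m * (C + 2^m)" using pc C_def by (intro mult_le_mono2) simp
    also have "\<dots> < 4*m * (2 * 2^m)"
    proof -
      have "C < 2^C" by (rule less_exp)
      also have "\<dots> < 2^m" using m_def by simp
      finally show ?thesis using m2 by simp
    qed
    also have "\<dots> = (8*m) * 2^m" by simp
    also have "\<dots> < 8^m * 2^m" using eight[OF m2] by simp
    also have "\<dots> = (8*2)^m" by (simp only: power_mult_distrib)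
    also have "\<dots> = (2^4)^m" by simp
    also have "\<dots> = 2^(4*m)" by (simp only: power_mult)
    finally show False by simp
  qed
qed


end
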